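(* Let $G_0$ be a topological group, $T$ a universal $G_0$-space, $x\in T$, and $G=Stab_{G_0}(x)=\{g\in G_0: gx=x\}$. Then $T$ is minimal if and only if $Fix_T(G)=\{y\in T: gy=y \text{ for all } g\in G\}$ is transitive with respect to $T$.
   Context: A $G_0$-space is a compact Hausdorff space with a continuous $G_0$-action. It is minimal if $\emptyset$ and the whole space are its only closed invariant subsets. A $G_0$-space $T$ is universal if every minimal $G_0$-space is the image of $T$ under a continuous surjective $G_0$-equivariant map. For a $G_0$-space $X$, a subset $Y\subset X$ is transitive with respect to $X$ if $\overline{G_0 y}=X$ for every $y\in Y$. *)

theory Defs
  imports "HOL-Analysis.Analysis"
begin

text \<open>The topological group G0 is a type of class topological_group_add
  (written additively: 0 is the identity, + the group operation).\<close>

definition G_space :: "'a topology \<Rightarrow> ('g::topological_group_add \<Rightarrow> 'a \<Rightarrow> 'a) \<Rightarrow> bool" where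
  "G_space X act \<longleftrightarrow> compact_space X \<and> Hausdorff_space X
     \<and> (\<forall>x\<in>topspace X. act 0 x = x)
     \<and> (\<forall>g h. \<forall>x\<in>topspace X. act (g + h) x = act g (act h x))
     \<and> continuous_map (prod_topology (euclidean :: 'g topology) X) X (\<lambda>(g, x). act g x)"

definition invariant_set :: "('g \<Rightarrow> 'a \<Rightarrow> 'a) \<Rightarrow> 'a set \<Rightarrow> bool" where
  "invariant_set act A \<longleftrightarrow> (\<forall>g. \<forall>y\<in>A. act g y \<in> A)"

definition minimal_G_space :: "'a topology \<Rightarrow> ('g::topological_group_add \<Rightarrow> 'a \<Rightarrow> 'a) \<Rightarrow> bool" where
  "minimal_G_space X act \<longleftrightarrow> G_space X act \<and> topspace X \<noteq> {}
     \<and> (\<forall>A. closedin X A \<and> invariant_set act A \<longrightarrow> A = {} \<or> A = topspace X)"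

definition equivariant_map ::
  "'a topology \<Rightarrow> ('g \<Rightarrow> 'a \<Rightarrow> 'a) \<Rightarrow> 'b topology \<Rightarrow> ('g \<Rightarrow> 'b \<Rightarrow> 'b) \<Rightarrow> ('a \<Rightarrow> 'b) \<Rightarrow> bool" where
  "equivariant_map X act Y act' f \<longleftrightarrow> (\<forall>g. \<forall>x\<in>topspace X. f (act g x) = act' g (f x))"

text \<open>Minimal spaces are quantified over carriers in the same ambient type as T
  (any such image has cardinality at most that of T, so this is no loss).\<close>

definition universal_G_space :: "'a topology \<Rightarrow> ('g::topological_group_add \<Rightarrow> 'a \<Rightarrow> 'a) \<Rightarrow> bool" where
  "universal_G_space T act \<longleftrightarrow> G_space T act \<and>
     (\<forall>(Y :: 'a topology) (act' :: 'g \<Rightarrow> 'a \<Rightarrow> 'a). minimal_G_space Y act' \<longrightarrow>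
        (\<exists>f. continuous_map T Y f \<and> f ` topspace T = topspace Y \<and> equivariant_map T act Y act' f))"

definition orbit :: "('g \<Rightarrow> 'a \<Rightarrow> 'a) \<Rightarrow> 'a \<Rightarrow> 'a set" where
  "orbit act y = range (\<lambda>g. act g y)"

definition transitive_wrt :: "'a set \<Rightarrow> 'a topology \<Rightarrow> ('g \<Rightarrow> 'a \<Rightarrow> 'a) \<Rightarrow> bool" where
  "transitive_wrt Y X act \<longleftrightarrow> (\<forall>y\<in>Y. X closure_of (orbit act y) = topspace X)"

definition Stab :: "('g \<Rightarrow> 'a \<Rightarrow> 'a) \<Rightarrow> 'a \<Rightarrow> 'g set" where
  "Stab act x = {g. act g x = x}"

definition Fix :: "'a topology \<Rightarrow> ('g \<Rightarrow> 'a \<Rightarrow> 'a) \<Rightarrow> 'g set \<Rightarrow> 'a set" where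
  "Fix T act G = {y \<in> topspace T. \<forall>g\<in>G. act g y = y}"

end

theory Submission
  imports Defs
begin

lemma act_cont:
  assumes "G_space T act"
  shows "continuous_map T T (act g)"
proof -
  have c: "continuous_map (prod_topology (euclidean :: 'b::topological_group_add topology) T) T (\<lambda>(g, x). act g x)"
    using assms unfolding G_space_def by blast
  have "continuous_map T (prod_topology (euclidean :: 'b topology) T) (\<lambda>y. (g, y))"
    by (simp add: continuous_map_pairwise o_def)
  from continuous_map_compose[OF this c] show ?thesis by (simp add: o_def)
qed

lemma act_in:
  assumes "G_space T act" "y \<in> topspace T"
  shows "act g y \<in> topspace T"
proof -
  have c: "continuous_map T T (act g)" by (rule act_cont[OF assms(1)])
  show ?thesis using continuous_map_image_subset_topspace[OF c] assms(2) by blast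
qed

lemma closure_inv:
  assumes "G_space T act" "invariant_set act A"
  shows "invariant_set act (T closure_of A)"
  unfolding invariant_set_def
proof (intro allI ballI)
  fix g y assume y: "y \<in> T closure_of A"
  have "act g ` (T closure_of A) \<subseteq> T closure_of (act g ` A)"
    by (rule continuous_map_image_closure_subset[OF act_cont[OF assms(1)]])
  also have "\<dots> \<subseteq> T closure_of A"
    using assms(2) unfolding invariant_set_def by (intro closure_of_mono) auto
  finally show "act g y \<in> T closure_of A" using y by blast
qed

lemma orbit_inv:
  assumes "G_space T act" "y \<in> topspace T"
  shows "invariant_set act (orbit act y)"
  unfolding invariant_set_def orbit_def
proof (intro allI ballI)
  fix g z assume "z \<in> range (\<lambda>g. act g y)"
  then obtain h where "z = act h y" by blast
  then have "act g z = act (g + h) y" using assms unfolding G_space_def by simp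
  then show "act g z \<in> range (\<lambda>g. act g y)" by blast
qed

lemma exists_minimal:
  assumes G: "G_space T act" and ne: "topspace T \<noteq> {}"
  shows "\<exists>M. closedin T M \<and> M \<noteq> {} \<and> invariant_set act M \<and>
    (\<forall>S. closedin T S \<and> S \<noteq> {} \<and> invariant_set act S \<and> S \<subseteq> M \<longrightarrow> S = M)"
proof -
  define \<A> where "\<A> = {S. closedin T S \<and> S \<noteq> {} \<and> invariant_set act S}"
  define A' where "A' = (\<lambda>S. topspace T - S) ` \<A>"
  have cp: "compact_space T" using G unfolding G_space_def by blast
  have top: "topspace T \<in> \<A>"
    using ne act_in[OF G] unfolding \<A>_def invariant_set_def by auto
  have "\<exists>M\<in>A'. \<forall>X\<in>A'. M \<subseteq> X \<longrightarrow> X = M"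
  proof (rule subset_Zorn)
    fix C assume ch: "subset.chain A' C"
    define \<U> where "\<U> = insert (topspace T) ((\<lambda>U. topspace T - U) ` C)"
    have CA: "C \<subseteq> A'" using ch by (simp add: subset_chain_def)
    have UA: "\<U> \<subseteq> \<A>"
    proof
      fix S assume "S \<in> \<U>"
      then consider "S = topspace T" | U where "U \<in> C" "S = topspace T - U"
        unfolding \<U>_def by blast
      then show "S \<in> \<A>"
      proof cases
        case 1 then show ?thesis using top by simp
      next
        case 2
        then obtain S0 where "S0 \<in> \<A>" "U = topspace T - S0" using CA A'_def by blast
        moreover have "S0 \<subseteq> topspace T" using \<open>S0 \<in> \<A>\<close> closedin_subset unfolding \<A>_def by blast
        ultimately show ?thesis using 2 by (simp add: Diff_Diff_Int Int_absorb1)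
      qed
    qed
    have Uch: "\<forall>X\<in>\<U>. \<forall>Y\<in>\<U>. X \<subseteq> Y \<or> Y \<subseteq> X"
    proof (intro ballI)
      fix X Y assume "X \<in> \<U>" "Y \<in> \<U>"
      have sub: "Z \<subseteq> topspace T" if "Z \<in> \<U>" for Z using that UA closedin_subset unfolding \<A>_def by blast
      show "X \<subseteq> Y \<or> Y \<subseteq> X"
      proof (cases "X = topspace T \<or> Y = topspace T")
        case True then show ?thesis using sub \<open>X \<in> \<U>\<close> \<open>Y \<in> \<U>\<close> by blast
      next
        case False
        then obtain U V where "U \<in> C" "V \<in> C" "X = topspace T - U" "Y = topspace T - V"
          using \<open>X \<in> \<U>\<close> \<open>Y \<in> \<U>\<close> unfolding \<U>_def by blast
        moreover have "U \<subseteq> V \<or> V \<subseteq> U" using ch \<open>U \<in> C\<close> \<open>V \<in> C\<close> by (simp add: subset_chain_def)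
        ultimately show ?thesis by blast
      qed
    qed
    have clo: "\<forall>S\<in>\<U>. closedin T S" using UA unfolding \<A>_def by blast
    have fip: "\<forall>\<F>. finite \<F> \<and> \<F> \<subseteq> \<U> \<longrightarrow> \<Inter>\<F> \<noteq> {}"
    proof (intro allI impI)
      fix \<F> assume F: "finite \<F> \<and> \<F> \<subseteq> \<U>"
      show "\<Inter>\<F> \<noteq> {}"
      proof (cases "\<F> = {}")
        case True then show ?thesis by simp
      next
        case False
        have "subset.chain \<U> \<F>" using F Uch by (auto simp: subset_chain_def)
        then have "\<Inter>\<F> \<in> \<F>" using Inter_in_chain F False by blast
        then show ?thesis using F UA unfolding \<A>_def by blast
      qed
    qed
    have I: "\<Inter>\<U> \<noteq> {}" using cp[unfolded compact_space_fip, rule_format, of \<U>] clo fip by blast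
    have Icl: "closedin T (\<Inter>\<U>)"
    proof (rule closedin_Inter)
      show "\<U> \<noteq> {}" unfolding \<U>_def by blast
      fix k assume "k \<in> \<U>" then show "closedin T k" using clo by blast
    qed
    have Iinv: "invariant_set act (\<Inter>\<U>)"
      using UA unfolding \<A>_def invariant_set_def by blast
    have "\<Inter>\<U> \<in> \<A>" using I Icl Iinv unfolding \<A>_def by blast
    then have "topspace T - \<Inter>\<U> \<in> A'" unfolding A'_def by blast
    moreover have "\<forall>X\<in>C. X \<subseteq> topspace T - \<Inter>\<U>"
    proof
      fix X assume X: "X \<in> C"
      then have "X \<subseteq> topspace T" using CA A'_def by blast
      moreover have "topspace T - X \<in> \<U>" using X unfolding \<U>_def by blast
      ultimately show "X \<subseteq> topspace T - \<Inter>\<U>" by blast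
    qed
    ultimately show "\<exists>U\<in>A'. \<forall>X\<in>C. X \<subseteq> U" by blast
  qed
  then obtain M' where M': "M' \<in> A'" "\<forall>X\<in>A'. M' \<subseteq> X \<longrightarrow> X = M'" by blast
  then obtain M where M: "M \<in> \<A>" "M' = topspace T - M" unfolding A'_def by blast
  have Msub: "M \<subseteq> topspace T" using M closedin_subset unfolding \<A>_def by blast
  show ?thesis
  proof (intro exI conjI allI impI)
    show "closedin T M" "M \<noteq> {}" "invariant_set act M" using M unfolding \<A>_def by auto
    fix S assume S: "closedin T S \<and> S \<noteq> {} \<and> invariant_set act S \<and> S \<subseteq> M"
    then have "S \<in> \<A>" unfolding \<A>_def by blast
    then have "topspace T - S \<in> A'" unfolding A'_def by blast
    moreover have "M' \<subseteq> topspace T - S" using M S by blast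
    ultimately have "topspace T - S = M'" using M'(2) by blast
    then have "topspace T - S = topspace T - M" using M(2) by simp
    then show "S = M" using S Msub by blast
  qed
qed

lemma sub_G_space:
  assumes G: "G_space T act" and M: "closedin T M" "invariant_set act M"
  shows "G_space (subtopology T M) act"
proof -
  have Msub: "M \<subseteq> topspace T" using M closedin_subset by blast
  have c: "continuous_map (prod_topology (euclidean :: 'b::topological_group_add topology) T) T (\<lambda>(g, x). act g x)"
    using G unfolding G_space_def by blast
  have eq: "prod_topology (euclidean :: 'b topology) (subtopology T M)
      = subtopology (prod_topology euclidean T) (UNIV \<times> M)"
    by (simp add: subtopology_Times)
  have "continuous_map (prod_topology (euclidean :: 'b topology) (subtopology T M)) (subtopology T M) (\<lambda>(g, x). act g x)"
  proof -
    have c2: "continuous_map (subtopology (prod_topology (euclidean :: 'b topology) T) (UNIV \<times> M)) T (\<lambda>(g, x). act g x)"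
      using c by (rule continuous_map_from_subtopology)
    have "(\<lambda>(g, x). act g x) ` topspace (subtopology (prod_topology (euclidean :: 'b topology) T) (UNIV \<times> M)) \<subseteq> M"
      using M(2) unfolding invariant_set_def by auto
    with c2 show ?thesis unfolding eq continuous_map_in_subtopology by blast
  qed
  moreover have "compact_space (subtopology T M)"
    using G M by (intro compact_space_subtopology closedin_compact_space) (auto simp: G_space_def)
  moreover have "Hausdorff_space (subtopology T M)"
    using G by (intro Hausdorff_space_subtopology) (auto simp: G_space_def)
  ultimately show ?thesis using G unfolding G_space_def by auto
qed

theorem mainTheorem12:
  fixes T :: "'a topology" and act :: "'g::topological_group_add \<Rightarrow> 'a \<Rightarrow> 'a" and x :: 'a
  assumes "universal_G_space T act" and "x \<in> topspace T"
  shows "minimal_G_space T act \<longleftrightarrow> transitive_wrt (Fix T act (Stab act x)) T act"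
proof
  have G: "G_space T act" using assms(1) unfolding universal_G_space_def by blast
  assume min: "minimal_G_space T act"
  show "transitive_wrt (Fix T act (Stab act x)) T act"
    unfolding transitive_wrt_def
  proof
    fix y assume "y \<in> Fix T act (Stab act x)"
    then have y: "y \<in> topspace T" unfolding Fix_def by blast
    have inv: "invariant_set act (T closure_of orbit act y)"
      by (rule closure_inv[OF G orbit_inv[OF G y]])
    have "y \<in> orbit act y" using G y unfolding orbit_def G_space_def by (metis rangeI)
    moreover have "orbit act y \<subseteq> topspace T" using act_in[OF G y] unfolding orbit_def by blast
    ultimately have "y \<in> T closure_of orbit act y" using closure_of_subset by blast
    moreover have mm: "\<forall>A. closedin T A \<and> invariant_set act A \<longrightarrow> A = {} \<or> A = topspace T"
      using min unfolding minimal_G_space_def by (elim conjE)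
    ultimately show "T closure_of orbit act y = topspace T"
      using mm[rule_format, OF conjI[OF closedin_closure_of inv]] by blast
  qed
next
  have G: "G_space T act" using assms(1) unfolding universal_G_space_def by blast
  assume tr: "transitive_wrt (Fix T act (Stab act x)) T act"
  have ne: "topspace T \<noteq> {}" using assms(2) by blast
  obtain M where M: "closedin T M" "M \<noteq> {}" "invariant_set act M"
    and Mmin: "\<And>S. closedin T S \<and> S \<noteq> {} \<and> invariant_set act S \<and> S \<subseteq> M \<Longrightarrow> S = M"
    using exists_minimal[OF G ne] by blast
  have Msub: "M \<subseteq> topspace T" using M closedin_subset by blast
  have "minimal_G_space (subtopology T M) act"
    unfolding minimal_G_space_def
  proof (intro conjI allI impI)
    show "G_space (subtopology T M) act" using sub_G_space[OF G M(1) M(3)] .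
    show "topspace (subtopology T M) \<noteq> {}" using M(2) Msub by auto
    fix A assume A: "closedin (subtopology T M) A \<and> invariant_set act A"
    then have "closedin T A" using M(1) closedin_trans_full by blast
    moreover have "A \<subseteq> M" using A closedin_subset by fastforce
    ultimately show "A = {} \<or> A = topspace (subtopology T M)"
    proof -
      have tm: "topspace (subtopology T M) = M" using Msub by auto
      have "A \<noteq> {} \<Longrightarrow> A = M" using Mmin[of A] A \<open>closedin T A\<close> \<open>A \<subseteq> M\<close> by blast
      then show ?thesis using tm by blast
    qed
  qed
  then obtain f where f: "continuous_map T (subtopology T M) f" "f ` topspace T = topspace (subtopology T M)"
    "equivariant_map T act (subtopology T M) act f"
    using assms(1) unfolding universal_G_space_def by blast
  have fxM: "f x \<in> M" using f(2) assms(2) Msub by auto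
  have "f x \<in> Fix T act (Stab act x)"
    unfolding Fix_def Stab_def
  proof (intro CollectI conjI ballI)
    show "f x \<in> topspace T" using fxM Msub by blast
    fix g assume "g \<in> {g. act g x = x}"
    then have "act g x = x" by simp
    moreover have "f (act g x) = act g (f x)" using f(3) assms(2) unfolding equivariant_map_def by blast
    ultimately show "act g (f x) = f x" by simp
  qed
  then have cl: "T closure_of orbit act (f x) = topspace T" using tr unfolding transitive_wrt_def by blast
  have "orbit act (f x) \<subseteq> M" using M(3) fxM unfolding orbit_def invariant_set_def by blast
  then have "T closure_of orbit act (f x) \<subseteq> M" using M(1) by (rule closure_of_minimal)
  then have MT: "M = topspace T" using cl Msub by blast
  show "minimal_G_space T act"
    unfolding minimal_G_space_def
  proof (intro conjI allI impI)
    show "G_space T act" by (rule G)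
    show "topspace T \<noteq> {}" by (rule ne)
    fix A assume A: "closedin T A \<and> invariant_set act A"
    show "A = {} \<or> A = topspace T"
    proof (cases "A = {}")
      case False
      have "A \<subseteq> M" using A closedin_subset MT by blast
      then have "A = M" using Mmin[of A] A False by blast
      then show ?thesis using MT by blast
    qed simp
  qed
qed

end
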